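(* Let $1\le q\le p<\infty$, $m\in\mathbb{N}$, and let $E_1,\dots,E_m,F$ be Banach spaces over $\mathbb{K}=\mathbb{R}$ or $\mathbb{C}$. Then $$\eta^{m\text{-}mult}_{(p,q)}(E_1,\dots,E_m;F)\le\frac mp\ \text{ for } 1\le q\le 2,\qquad \eta^{m\text{-}mult}_{(p,q)}(E_1,\dots,E_m;F)\le\frac{mq}{2p}\ \text{ for } q\ge2.$$
   Context: For vectors $x_1,\dots,x_n$ in a Banach space $E$ and $q>0$, $\|(x_k)_{k=1}^n\|_{w,q}:=\sup_{\varphi\in B_{E^*}}\left(\sum_{k=1}^n|\varphi(x_k)|^q\right)^{1/q}$, where $B_{E^*}$ is the closed unit ball of the dual. $\mathcal{L}(E_1,\dots,E_m;F)$ is the space of bounded $m$-linear maps. For $p,q>0$, the multilinear $m$-index of $(p,q)$-summability $\eta^{m\text{-}mult}_{(p,q)}(E_1,\dots,E_m;F)$ is the infimum of all real numbers $s$ with the property: for every $T\in\mathcal{L}(E_1,\dots,E_m;F)$ there is a constant $C\ge0$ (depending only on $m$ and $T$) such that $$\left(\sum_{k_1,\dots,k_m=1}^n\|T(x^{(1)}_{k_1},\dots,x^{(m)}_{k_m})\|^p\right)^{1/p}\le C n^{s}\prod_{i=1}^m\|(x^{(i)}_{k})_{k=1}^n\|_{w,q}$$ for all positive integers $n$ and all $x^{(i)}_k\in E_i$, $1\le k\le n$, $1\le i\le m$. *)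

theory Defs
  imports "HOL-Analysis.Analysis" "HOL-Library.Extended_Real"
begin

text \<open>Scalar field K (real or complex) acting on a real Banach space: a K-normed
  vector space structure extending the real one.\<close>
definition kscal :: "('k::real_normed_field \<Rightarrow> 'a::real_normed_vector \<Rightarrow> 'a) \<Rightarrow> bool" where
  "kscal sm \<longleftrightarrow>
     (\<forall>r x. sm (of_real r) x = r *\<^sub>R x) \<and>
     (\<forall>a x y. sm a (x + y) = sm a x + sm a y) \<and>
     (\<forall>a b x. sm (a + b) x = sm a x + sm b x) \<and>
     (\<forall>a b x. sm a (sm b x) = sm (a * b) x) \<and>
     (\<forall>a x. norm (sm a x) = norm a * norm x)"

definition ksubspace :: "('k::real_normed_field \<Rightarrow> 'a::real_normed_vector \<Rightarrow> 'a) \<Rightarrow> 'a set \<Rightarrow> bool" where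
  "ksubspace sm S \<longleftrightarrow> 0 \<in> S \<and> (\<forall>x\<in>S. \<forall>y\<in>S. x + y \<in> S) \<and> (\<forall>c. \<forall>x\<in>S. sm c x \<in> S)"

text \<open>A family E_0,...,E_{m-1} of K-Banach spaces, realised as closed K-subspaces of a
  common K-Banach space.\<close>
definition banach_family :: "('k::real_normed_field \<Rightarrow> 'a::banach \<Rightarrow> 'a) \<Rightarrow> (nat \<Rightarrow> 'a set) \<Rightarrow> nat \<Rightarrow> bool" where
  "banach_family sm E m \<longleftrightarrow> kscal sm \<and> (\<forall>i<m. closed (E i) \<and> ksubspace sm (E i))"

definition dual_ball :: "('k::real_normed_field \<Rightarrow> 'a::real_normed_vector \<Rightarrow> 'a) \<Rightarrow> 'a set \<Rightarrow> ('a \<Rightarrow> 'k) set" where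
  "dual_ball sm S = {\<phi>. (\<forall>x\<in>S. \<forall>y\<in>S. \<phi> (x + y) = \<phi> x + \<phi> y) \<and>
                        (\<forall>c. \<forall>x\<in>S. \<phi> (sm c x) = c * \<phi> x) \<and>
                        (\<forall>x\<in>S. norm (\<phi> x) \<le> norm x)}"

definition weak_norm :: "('k::real_normed_field \<Rightarrow> 'a::real_normed_vector \<Rightarrow> 'a) \<Rightarrow> 'a set \<Rightarrow> real \<Rightarrow> (nat \<Rightarrow> 'a) \<Rightarrow> nat \<Rightarrow> real" where
  "weak_norm sm S q x n = (SUP \<phi>\<in>dual_ball sm S. (\<Sum>k<n. norm (\<phi> (x k)) powr q) powr (1/q))"

text \<open>Bounded m-linear maps E_0 x ... x E_{m-1} -> F (F the whole type 'b); arguments are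
  extensional tuples in PiE {..<m} E.\<close>
definition bounded_mlinear ::
  "('k::real_normed_field \<Rightarrow> 'a::real_normed_vector \<Rightarrow> 'a) \<Rightarrow> (nat \<Rightarrow> 'a set) \<Rightarrow> nat \<Rightarrow>
   ('k \<Rightarrow> 'b::real_normed_vector \<Rightarrow> 'b) \<Rightarrow> ((nat \<Rightarrow> 'a) \<Rightarrow> 'b) \<Rightarrow> bool" where
  "bounded_mlinear sm E m smF T \<longleftrightarrow>
     (\<forall>x\<in>PiE {..<m} E. \<forall>i<m. \<forall>y\<in>E i.
        T (x(i := x i + y)) = T x + T (x(i := y))) \<and>
     (\<forall>x\<in>PiE {..<m} E. \<forall>i<m. \<forall>c.
        T (x(i := sm c (x i))) = smF c (T x)) \<and>
     (\<exists>C. \<forall>x\<in>PiE {..<m} E. norm (T x) \<le> C * (\<Prod>i<m. norm (x i)))"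

definition eta_mult ::
  "('k::real_normed_field \<Rightarrow> 'a::real_normed_vector \<Rightarrow> 'a) \<Rightarrow> (nat \<Rightarrow> 'a set) \<Rightarrow>
   ('k \<Rightarrow> 'b::real_normed_vector \<Rightarrow> 'b) \<Rightarrow> nat \<Rightarrow> real \<Rightarrow> real \<Rightarrow> ereal" where
  "eta_mult sm E smF m p q = Inf (ereal ` {s::real.
     \<forall>T. bounded_mlinear sm E m smF T \<longrightarrow>
       (\<exists>C\<ge>0. \<forall>n::nat. \<forall>xs::nat \<Rightarrow> nat \<Rightarrow> 'a. n \<ge> 1 \<longrightarrow> (\<forall>i<m. \<forall>k<n. xs i k \<in> E i) \<longrightarrow>
          (\<Sum>k\<in>PiE {..<m} (\<lambda>_. {..<n}). norm (T (\<lambda>i\<in>{..<m}. xs i (k i))) powr p) powr (1/p)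
            \<le> C * real n powr s * (\<Prod>i<m. weak_norm sm (E i) q (xs i) n))})"

end

theory Submission
  imports Defs
begin


definition lingraph :: "'a::real_normed_vector set \<Rightarrow> ('a \<times> real) set \<Rightarrow> bool" where
  "lingraph S G \<longleftrightarrow> G \<subseteq> S \<times> UNIV \<and>
     (\<forall>a u b v. (a,u)\<in>G \<longrightarrow> (b,v)\<in>G \<longrightarrow> (a+b,u+v)\<in>G) \<and>
     (\<forall>a u c. (a,u)\<in>G \<longrightarrow> (c *\<^sub>R a, c*u)\<in>G) \<and>
     (\<forall>a u. (a,u)\<in>G \<longrightarrow> u \<le> norm a)"

lemma lingraph_single:
  assumes "lingraph S G" "(a,u)\<in>G" "(a,v)\<in>G" shows "u = v"
proof -
  have sc: "\<And>a u c. (a,u)\<in>G \<Longrightarrow> (c *\<^sub>R a, c*u)\<in>G" using assms(1) unfolding lingraph_def by blast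
  have ad: "\<And>a u b v. (a,u)\<in>G \<Longrightarrow> (b,v)\<in>G \<Longrightarrow> (a+b,u+v)\<in>G" using assms(1) unfolding lingraph_def by blast
  have m: "(- a, - v) \<in> G" using sc[OF assms(3), of "- 1"] by simp
  have "(a + - a, u + - v) \<in> G" using ad[OF assms(2) m] .
  hence z: "(0, u - v) \<in> G" by simp
  have "(0::'a, v - u) \<in> G" using sc[OF z, of "- 1"] by simp
  hence "v - u \<le> 0" using assms(1) unfolding lingraph_def by fastforce
  moreover have "u - v \<le> 0" using z assms(1) unfolding lingraph_def by fastforce
  ultimately show ?thesis by simp
qed

lemma lingraph_extend:
  fixes S :: "'a::real_normed_vector set"
  assumes G: "lingraph S G" and y: "y \<in> S" and ny: "y \<notin> fst ` G"
    and Sadd: "\<forall>x\<in>S. \<forall>z\<in>S. x + z \<in> S" and Ssc: "\<forall>c. \<forall>x\<in>S. c *\<^sub>R x \<in> S"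
    and G0: "(0,0) \<in> G"
  shows "\<exists>G'. lingraph S G' \<and> G \<subseteq> G' \<and> G' \<noteq> G"
proof -
  define A where "A = {v - norm (b - y) | b v. (b,v) \<in> G}"
  define c where "c = Sup A"
  have key: "v - norm (b - y) \<le> norm (a + y) - u" if "(b,v)\<in>G" "(a,u)\<in>G" for a b u v
  proof -
    have "(b+a, v+u) \<in> G" using G that unfolding lingraph_def by blast
    hence "v + u \<le> norm (b + a)" using G unfolding lingraph_def by blast
    also have "norm (b + a) \<le> norm (b - y) + norm (a + y)"
      using norm_triangle_ineq[of "b - y" "a + y"] by simp
    finally show ?thesis by simp
  qed
  have Ane: "A \<noteq> {}" using G0 unfolding A_def by blast
  have Abdd: "bdd_above A" unfolding A_def bdd_above_def using key G0 by blast
  have cup: "v - norm (b - y) \<le> c" if "(b,v)\<in>G" for b v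
    unfolding c_def using that Abdd by (intro cSup_upper) (auto simp: A_def)
  have clow: "c \<le> norm (a + y) - u" if "(a,u)\<in>G" for a u
    unfolding c_def using that Ane key by (intro cSup_least) (auto simp: A_def)
  define G' where "G' = {(a + t *\<^sub>R y, u + t * c) | a u t. (a,u) \<in> G}"
  have dom: "u + t * c \<le> norm (a + t *\<^sub>R y)" if "(a,u)\<in>G" for a u t
  proof (cases "t = 0")
    case True then show ?thesis using G that unfolding lingraph_def by auto
  next
    case False
    show ?thesis
    proof (cases "t > 0")
      case True
      have "((1/t) *\<^sub>R a, (1/t)*u) \<in> G" using G that unfolding lingraph_def by blast
      hence "c \<le> norm ((1/t) *\<^sub>R a + y) - (1/t)*u" by (rule clow)
      hence "t * c \<le> t * (norm ((1/t) *\<^sub>R a + y) - (1/t)*u)" using True by simp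
      also have "\<dots> = t * norm ((1/t) *\<^sub>R a + y) - u" using True by (simp add: algebra_simps)
      also have "t * norm ((1/t) *\<^sub>R a + y) = norm (t *\<^sub>R ((1/t) *\<^sub>R a + y))" using True by simp
      also have "t *\<^sub>R ((1/t) *\<^sub>R a + y) = a + t *\<^sub>R y" using True by (simp add: algebra_simps)
      finally show ?thesis by simp
    next
      case neg: False
      define s where "s = - t"
      have s: "s > 0" using neg False s_def by simp
      have "((1/s) *\<^sub>R a, (1/s)*u) \<in> G" using G that unfolding lingraph_def by blast
      hence "(1/s)*u - norm ((1/s) *\<^sub>R a - y) \<le> c" by (rule cup)
      hence "s * ((1/s)*u - norm ((1/s) *\<^sub>R a - y)) \<le> s * c" using s by simp
      hence "u - s * norm ((1/s) *\<^sub>R a - y) \<le> s * c" using s by (simp add: algebra_simps)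
      also have "s * norm ((1/s) *\<^sub>R a - y) = norm (s *\<^sub>R ((1/s) *\<^sub>R a - y))" using s by simp
      also have "s *\<^sub>R ((1/s) *\<^sub>R a - y) = a + t *\<^sub>R y" using s s_def by (simp add: algebra_simps)
      finally show ?thesis using s_def by simp
    qed
  qed
  have "lingraph S G'"
    unfolding lingraph_def
  proof (intro conjI allI impI)
    show "G' \<subseteq> S \<times> UNIV"
      using G y Sadd Ssc unfolding G'_def lingraph_def by blast
  next
    fix a u b v assume "(a,u)\<in>G'" "(b,v)\<in>G'"
    then obtain a1 u1 t1 a2 u2 t2 where "(a1,u1)\<in>G" "(a2,u2)\<in>G"
      "a = a1 + t1 *\<^sub>R y" "u = u1 + t1*c" "b = a2 + t2 *\<^sub>R y" "v = u2 + t2*c"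
      unfolding G'_def by blast
    moreover have "(a1+a2, u1+u2) \<in> G" using G calculation unfolding lingraph_def by blast
    hence "((a1+a2) + (t1+t2) *\<^sub>R y, (u1+u2) + (t1+t2)*c) \<in> G'" unfolding G'_def by blast
    moreover have "(a+b, u+v) = ((a1+a2) + (t1+t2) *\<^sub>R y, (u1+u2) + (t1+t2)*c)"
      using calculation by (simp add: algebra_simps)
    ultimately show "(a+b, u+v) \<in> G'" by metis
  next
    fix a u d assume "(a,u)\<in>G'"
    then obtain a1 u1 t1 where "(a1,u1)\<in>G" "a = a1 + t1 *\<^sub>R y" "u = u1 + t1*c"
      unfolding G'_def by blast
    moreover have "(d *\<^sub>R a1, d*u1) \<in> G" using G calculation unfolding lingraph_def by blast
    hence "(d *\<^sub>R a1 + (d*t1) *\<^sub>R y, d*u1 + (d*t1)*c) \<in> G'" unfolding G'_def by blast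
    moreover have "(d *\<^sub>R a, d*u) = (d *\<^sub>R a1 + (d*t1) *\<^sub>R y, d*u1 + (d*t1)*c)"
      using calculation by (simp add: algebra_simps)
    ultimately show "(d *\<^sub>R a, d*u) \<in> G'" by simp
  next
    fix a u assume "(a,u)\<in>G'"
    then show "u \<le> norm a" unfolding G'_def using dom by blast
  qed
  moreover have "G \<subseteq> G'"
  proof
    fix x assume "x \<in> G" then obtain a u where "x = (a,u)" "(a,u)\<in>G" by (cases x) auto
    moreover have "(a + 0 *\<^sub>R y, u + 0*c) \<in> G'" unfolding G'_def using \<open>(a,u)\<in>G\<close> by blast
    ultimately show "x \<in> G'" by simp
  qed
  moreover have "(0 + 1 *\<^sub>R y, 0 + 1*c) \<in> G'" using G0 unfolding G'_def by blast
  hence "G' \<noteq> G" using ny by force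
  ultimately show ?thesis by blast
qed

lemma hahn_banach_real:
  fixes S :: "'a::real_normed_vector set"
  assumes Sadd: "\<forall>x\<in>S. \<forall>z\<in>S. x + z \<in> S" and Ssc: "\<forall>c. \<forall>x\<in>S. c *\<^sub>R x \<in> S"
    and x0: "x0 \<in> S"
  shows "\<exists>f. (\<forall>x\<in>S. \<forall>y\<in>S. f (x + y) = f x + f y) \<and> (\<forall>c. \<forall>x\<in>S. f (c *\<^sub>R x) = c * f x)
            \<and> (\<forall>x\<in>S. \<bar>f x\<bar> \<le> norm x) \<and> f x0 = norm x0"
proof -
  define \<A> where "\<A> = {G. lingraph S G \<and> (x0, norm x0) \<in> G}"
  define G0 where "G0 = {(t *\<^sub>R x0, t * norm x0) | t. True}"
  have "lingraph S G0" unfolding lingraph_def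
  proof (intro conjI allI impI)
    show "G0 \<subseteq> S \<times> UNIV" using Ssc x0 unfolding G0_def by auto
  next
    fix a u b v assume "(a,u)\<in>G0" "(b,v)\<in>G0"
    then obtain t1 t2 where "a = t1 *\<^sub>R x0" "u = t1 * norm x0" "b = t2 *\<^sub>R x0" "v = t2 * norm x0"
      unfolding G0_def by blast
    moreover have "((t1+t2) *\<^sub>R x0, (t1+t2) * norm x0) \<in> G0" unfolding G0_def by blast
    ultimately show "(a+b, u+v) \<in> G0" by (simp add: algebra_simps)
  next
    fix a u c assume "(a,u)\<in>G0"
    then obtain t1 where "a = t1 *\<^sub>R x0" "u = t1 * norm x0" unfolding G0_def by blast
    moreover have "((c*t1) *\<^sub>R x0, (c*t1) * norm x0) \<in> G0" unfolding G0_def by blast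
    ultimately show "(c *\<^sub>R a, c*u) \<in> G0" by (simp add: algebra_simps)
  next
    fix a u assume "(a,u)\<in>G0"
    then obtain t1 where "a = t1 *\<^sub>R x0" "u = t1 * norm x0" unfolding G0_def by blast
    then show "u \<le> norm a" by (simp add: mult_right_mono)
  qed
  moreover have "(1 *\<^sub>R x0, 1 * norm x0) \<in> G0" unfolding G0_def by blast
  ultimately have "G0 \<in> \<A>" unfolding \<A>_def by simp
  hence ne: "\<A> \<noteq> {}" by blast
  have "\<exists>M\<in>\<A>. \<forall>X\<in>\<A>. M \<subseteq> X \<longrightarrow> X = M"
  proof (rule subset_Zorn_nonempty[OF ne])
    fix \<C> assume Cne: "\<C> \<noteq> {}" and ch: "subset.chain \<A> \<C>"
    have sub: "\<C> \<subseteq> \<A>" and tot: "\<And>X Y. X\<in>\<C> \<Longrightarrow> Y\<in>\<C> \<Longrightarrow> X \<subseteq> Y \<or> Y \<subseteq> X"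
      using ch by (auto simp: subset_chain_def)
    have L: "\<And>G. G\<in>\<C> \<Longrightarrow> lingraph S G" and P: "\<And>G. G\<in>\<C> \<Longrightarrow> (x0, norm x0) \<in> G"
      using sub unfolding \<A>_def by auto
    have "lingraph S (\<Union>\<C>)" unfolding lingraph_def
    proof (intro conjI allI impI)
      show "\<Union>\<C> \<subseteq> S \<times> UNIV" using L unfolding lingraph_def by blast
    next
      fix a u b v assume "(a,u)\<in>\<Union>\<C>" "(b,v)\<in>\<Union>\<C>"
      then obtain X Y where XY: "X\<in>\<C>" "Y\<in>\<C>" "(a,u)\<in>X" "(b,v)\<in>Y" by blast
      show "(a+b,u+v)\<in>\<Union>\<C>"
      proof (cases "X \<subseteq> Y")
        case True
        then have "(a+b,u+v)\<in>Y" using L[OF XY(2)] XY unfolding lingraph_def by blast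
        then show ?thesis using XY by blast
      next
        case False
        then have "Y \<subseteq> X" using tot XY by blast
        then have "(a+b,u+v)\<in>X" using L[OF XY(1)] XY unfolding lingraph_def by blast
        then show ?thesis using XY by blast
      qed
    next
      fix a u c assume "(a,u)\<in>\<Union>\<C>"
      then obtain X where "X\<in>\<C>" "(a,u)\<in>X" by blast
      then show "(c *\<^sub>R a, c*u)\<in>\<Union>\<C>" using L unfolding lingraph_def by blast
    next
      fix a u assume "(a,u)\<in>\<Union>\<C>"
      then obtain X where "X\<in>\<C>" "(a,u)\<in>X" by blast
      then show "u \<le> norm a" using L unfolding lingraph_def by blast
    qed
    moreover have "(x0, norm x0) \<in> \<Union>\<C>" using Cne P by blast
    ultimately show "\<Union>\<C> \<in> \<A>" unfolding \<A>_def by blast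
  qed
  then obtain M where M: "M \<in> \<A>" and Mmax: "\<And>X. X\<in>\<A> \<Longrightarrow> M \<subseteq> X \<Longrightarrow> X = M" by blast
  have LM: "lingraph S M" and PM: "(x0, norm x0) \<in> M" using M unfolding \<A>_def by auto
  have sc: "\<And>a u c. (a,u)\<in>M \<Longrightarrow> (c *\<^sub>R a, c*u)\<in>M" using LM unfolding lingraph_def by blast
  have ad: "\<And>a u b v. (a,u)\<in>M \<Longrightarrow> (b,v)\<in>M \<Longrightarrow> (a+b,u+v)\<in>M" using LM unfolding lingraph_def by blast
  have dm: "\<And>a u. (a,u)\<in>M \<Longrightarrow> u \<le> norm a" using LM unfolding lingraph_def by blast
  have M0: "(0,0) \<in> M" using sc[OF PM, of 0] by simp
  have full: "\<exists>u. (x,u) \<in> M" if "x \<in> S" for x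
  proof (rule ccontr)
    assume "\<nexists>u. (x, u) \<in> M"
    hence "x \<notin> fst ` M" by force
    from lingraph_extend[OF LM that this Sadd Ssc M0] obtain G' where
      "lingraph S G'" "M \<subseteq> G'" "G' \<noteq> M" by blast
    moreover have "G' \<in> \<A>" using calculation(1,2) PM unfolding \<A>_def by auto
    ultimately show False using Mmax by metis
  qed
  define f where "f x = (THE u. (x,u) \<in> M)" for x
  have fM: "(x, f x) \<in> M" if xS: "x \<in> S" for x
  proof -
    obtain u where u: "(x,u)\<in>M" using full[OF xS] by blast
    have "f x = u" unfolding f_def
    proof (rule the_equality)
      show "(x,u) \<in> M" by (rule u)
      fix v assume "(x,v) \<in> M" then show "v = u" using lingraph_single[OF LM u] by simp
    qed
    then show ?thesis using u by simp
  qed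
  have feq: "f x = u" if "(x,u)\<in>M" for x u
  proof -
    have xS: "x \<in> S" using that LM unfolding lingraph_def by blast
    show ?thesis using lingraph_single[OF LM fM[OF xS] that] by simp
  qed
  show ?thesis
  proof (intro exI[of _ f] conjI ballI allI)
    fix x y assume x: "x\<in>S" and y: "y\<in>S"
    show "f (x + y) = f x + f y" using feq[OF ad[OF fM[OF x] fM[OF y]]] .
  next
    fix c x assume x: "x\<in>S"
    show "f (c *\<^sub>R x) = c * f x" using feq[OF sc[OF fM[OF x]]] .
  next
    fix x assume x: "x\<in>S"
    have "f x \<le> norm x" using dm[OF fM[OF x]] .
    moreover have "- f x \<le> norm x" using dm[OF sc[OF fM[OF x], of "- 1"]] by simp
    ultimately show "\<bar>f x\<bar> \<le> norm x" by simp
  next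
    show "f x0 = norm x0" using feq[OF PM] .
  qed
qed



lemma norm_le_weak_norm:
  fixes sm :: "'k::real_normed_field \<Rightarrow> 'a::real_normed_vector \<Rightarrow> 'a"
  assumes phi: "\<phi> \<in> dual_ball sm S" and nx: "norm (xs k) \<le> norm (\<phi> (xs k))" and k: "k<n"
    and xs: "\<forall>j<n. xs j \<in> S" and q: "q>0"
  shows "norm (xs k) \<le> weak_norm sm S q xs n"
proof -
  let ?g = "\<lambda>\<psi>. (\<Sum>j<n. norm (\<psi> (xs j)) powr q) powr (1/q)"
  have bdd: "bdd_above (?g ` dual_ball sm S)"
  proof (rule bdd_aboveI2)
    fix \<psi> assume "\<psi> \<in> dual_ball sm S"
    hence le: "norm (\<psi> (xs j)) \<le> norm (xs j)" if "j<n" for j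
      using xs that unfolding dual_ball_def by blast
    have "(\<Sum>j<n. norm (\<psi> (xs j)) powr q) \<le> (\<Sum>j<n. norm (xs j) powr q)"
      by (rule sum_mono) (use le q in \<open>auto intro: powr_mono2\<close>)
    then show "?g \<psi> \<le> (\<Sum>j<n. norm (xs j) powr q) powr (1/q)"
      using q by (intro powr_mono2) (auto intro: sum_nonneg)
  qed
  have "norm (xs k) \<le> norm (\<phi> (xs k))" by (rule nx)
  also have "norm (\<phi> (xs k)) = (norm (\<phi> (xs k)) powr q) powr (1/q)"
    using q by (simp add: powr_powr)
  also have "\<dots> \<le> ?g \<phi>"
    using q k by (intro powr_mono2) (auto intro!: member_le_sum)
  also have "\<dots> \<le> weak_norm sm S q xs n"
    unfolding weak_norm_def using phi bdd by (rule cSUP_upper)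
  finally show ?thesis .
qed

lemma complex_norming:
  fixes sm :: "complex \<Rightarrow> 'a::real_normed_vector \<Rightarrow> 'a"
  assumes ks: "kscal sm" and sub: "ksubspace sm S" and x0: "x0 \<in> S"
  shows "\<exists>\<phi>\<in>dual_ball sm S. norm x0 \<le> norm (\<phi> x0)"
proof -
  have r: "\<And>r x. sm (of_real r) x = r *\<^sub>R x" and ad: "\<And>a x y. sm a (x + y) = sm a x + sm a y"
    and da: "\<And>a b x. sm (a + b) x = sm a x + sm b x" and cp: "\<And>a b x. sm a (sm b x) = sm (a * b) x"
    and nm: "\<And>a x. norm (sm a x) = norm a * norm x"
    using ks unfolding kscal_def by blast+
  have Sadd: "\<forall>x\<in>S. \<forall>z\<in>S. x + z \<in> S" and Ssm: "\<And>c x. x \<in> S \<Longrightarrow> sm c x \<in> S"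
    using sub unfolding ksubspace_def by blast+
  have Ssc: "\<forall>c. \<forall>x\<in>S. c *\<^sub>R x \<in> S" using Ssm r by metis
  obtain f where fadd: "\<And>x y. x\<in>S \<Longrightarrow> y\<in>S \<Longrightarrow> f (x + y) = f x + f y"
    and fsc: "\<And>c x. x\<in>S \<Longrightarrow> f (c *\<^sub>R x) = c * f x"
    and fn: "\<And>x. x\<in>S \<Longrightarrow> \<bar>f x\<bar> \<le> norm x" and f0: "f x0 = norm x0"
    using hahn_banach_real[OF Sadd Ssc x0] by blast
  define \<phi> where "\<phi> x = complex_of_real (f x) - \<i> * complex_of_real (f (sm \<i> x))" for x
  have Re\<phi>: "Re (\<phi> x) = f x" for x unfolding \<phi>_def by simp
  have decomp: "sm c x = Re c *\<^sub>R x + Im c *\<^sub>R sm \<i> x" for c x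
  proof -
    have c: "c = of_real (Re c) + of_real (Im c) * \<i>" by (simp add: complex_eq_iff)
    have "sm c x = sm (of_real (Re c)) x + sm (of_real (Im c) * \<i>) x"
      by (subst c) (rule da)
    also have "sm (of_real (Im c) * \<i>) x = Im c *\<^sub>R sm \<i> x" using cp[symmetric] r by metis
    finally show ?thesis using r by simp
  qed
  have fsm: "f (sm c x) = Re c * f x + Im c * f (sm \<i> x)" if "x \<in> S" for c x
  proof -
    have i: "sm \<i> x \<in> S" using Ssm that .
    have a: "Re c *\<^sub>R x \<in> S" "Im c *\<^sub>R sm \<i> x \<in> S" using Ssc that i by auto
    have "f (sm c x) = f (Re c *\<^sub>R x + Im c *\<^sub>R sm \<i> x)" using decomp[of c x] by (rule arg_cong)
    also have "\<dots> = f (Re c *\<^sub>R x) + f (Im c *\<^sub>R sm \<i> x)" using fadd[OF a] .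
    also have "\<dots> = Re c * f x + Im c * f (sm \<i> x)" using fsc[OF that] fsc[OF i] by simp
    finally show ?thesis .
  qed
  have \<phi>hom: "\<phi> (sm c x) = c * \<phi> x" if "x \<in> S" for c x
  proof -
    have "f (sm \<i> (sm c x)) = f (sm (\<i> * c) x)" by (simp add: cp)
    also have "\<dots> = - Im c * f x + Re c * f (sm \<i> x)" using fsm[OF that, of "\<i> * c"] by simp
    finally show ?thesis unfolding \<phi>_def using fsm[OF that, of c]
      by (simp add: complex_eq_iff algebra_simps)
  qed
  have \<phi>add: "\<phi> (x + y) = \<phi> x + \<phi> y" if "x\<in>S" "y\<in>S" for x y
    unfolding \<phi>_def using that Ssm by (simp add: ad fadd algebra_simps)
  have \<phi>n: "norm (\<phi> x) \<le> norm x" if xS: "x\<in>S" for x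
  proof (cases "\<phi> x = 0")
    case True then show ?thesis by simp
  next
    case False
    define z where "z = \<phi> x"
    define w where "w = cnj z / complex_of_real (cmod z)"
    have zn: "cmod z > 0" using False z_def by simp
    have zz0: "z * cnj z = complex_of_real ((cmod z)^2)" by (rule complex_norm_square[symmetric])
    have zz: "z * cnj z = complex_of_real (cmod z) * complex_of_real (cmod z)"
      using zz0 by (simp only: power2_eq_square of_real_mult)
    have wn: "cmod w = 1" using zn unfolding w_def by (simp add: norm_divide)
    have "\<phi> (sm w x) = w * z" using \<phi>hom[OF xS] z_def by simp
    also have "w * z = complex_of_real (cmod z)" unfolding w_def using zn zz
      by (simp add: field_simps mult.commute)
    finally have "cmod z = f (sm w x)" using Re\<phi>[of "sm w x"] by simp
    also have "\<dots> \<le> norm (sm w x)" using fn[OF Ssm[OF xS, of w]] by simp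
    also have "\<dots> = norm x" using nm wn by simp
    finally show ?thesis using z_def by simp
  qed
  have "\<phi> \<in> dual_ball sm S" unfolding dual_ball_def using \<phi>add \<phi>hom \<phi>n by blast
  moreover have "norm x0 \<le> norm (\<phi> x0)" using f0 Re\<phi>[of x0] abs_Re_le_cmod[of "\<phi> x0"] by simp
  ultimately show ?thesis by blast
qed

lemma real_norming:
  fixes S :: "'a::real_normed_vector set"
  assumes sub: "ksubspace (scaleR :: real \<Rightarrow> 'a \<Rightarrow> 'a) S" and x0: "x0 \<in> S"
  shows "\<exists>\<phi>\<in>dual_ball (scaleR :: real \<Rightarrow> 'a \<Rightarrow> 'a) S. norm x0 \<le> norm (\<phi> x0)"
proof -
  have Sadd: "\<forall>x\<in>S. \<forall>z\<in>S. x + z \<in> S" and Ssc: "\<forall>c. \<forall>x\<in>S. c *\<^sub>R x \<in> S"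
    using sub unfolding ksubspace_def by blast+
  obtain f where "(\<forall>x\<in>S. \<forall>y\<in>S. f (x + y) = f x + f y) \<and> (\<forall>c. \<forall>x\<in>S. f (c *\<^sub>R x) = c * f x)
            \<and> (\<forall>x\<in>S. \<bar>f x\<bar> \<le> norm x) \<and> f x0 = norm x0"
    using hahn_banach_real[OF Sadd Ssc x0] by blast
  hence "f \<in> dual_ball (scaleR :: real \<Rightarrow> 'a \<Rightarrow> 'a) S" "norm x0 \<le> norm (f x0)"
    unfolding dual_ball_def by simp_all
  then show ?thesis by blast
qed

lemma eta_bound:
  fixes sm :: "'k::real_normed_field \<Rightarrow> 'a::real_normed_vector \<Rightarrow> 'a"
    and smF :: "'k \<Rightarrow> 'b::real_normed_vector \<Rightarrow> 'b"
  assumes norming: "\<And>i x. i < m \<Longrightarrow> x \<in> E i \<Longrightarrow> \<exists>\<phi>\<in>dual_ball sm (E i). norm x \<le> norm (\<phi> x)"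
    and p: "p > 0" and q: "q > 0"
  shows "eta_mult sm E smF m p q \<le> ereal (m/p)"
proof -
  have "m/p \<in> {s::real.
     \<forall>T. bounded_mlinear sm E m smF T \<longrightarrow>
       (\<exists>C\<ge>0. \<forall>n::nat. \<forall>xs::nat \<Rightarrow> nat \<Rightarrow> 'a. n \<ge> 1 \<longrightarrow> (\<forall>i<m. \<forall>k<n. xs i k \<in> E i) \<longrightarrow>
          (\<Sum>k\<in>PiE {..<m} (\<lambda>_. {..<n}). norm (T (\<lambda>i\<in>{..<m}. xs i (k i))) powr p) powr (1/p)
            \<le> C * real n powr s * (\<Prod>i<m. weak_norm sm (E i) q (xs i) n))}"
  proof (intro CollectI allI impI)
    fix T assume bT: "bounded_mlinear sm E m smF T"
    have "\<exists>C. \<forall>x\<in>PiE {..<m} E. norm (T x) \<le> C * (\<Prod>i<m. norm (x i))"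
      using bT unfolding bounded_mlinear_def by (rule conjunct2[THEN conjunct2])
    then obtain C0 where C0': "\<forall>x\<in>PiE {..<m} E. norm (T x) \<le> C0 * (\<Prod>i<m. norm (x i))" by (elim exE)
    have C0: "\<And>x. x \<in> PiE {..<m} E \<Longrightarrow> norm (T x) \<le> C0 * (\<Prod>i<m. norm (x i))"
      using C0' by (rule bspec)
    define C where "C = max C0 0"
    show "\<exists>C\<ge>0. \<forall>n::nat. \<forall>xs::nat \<Rightarrow> nat \<Rightarrow> 'a. n \<ge> 1 \<longrightarrow> (\<forall>i<m. \<forall>k<n. xs i k \<in> E i) \<longrightarrow>
          (\<Sum>k\<in>PiE {..<m} (\<lambda>_. {..<n}). norm (T (\<lambda>i\<in>{..<m}. xs i (k i))) powr p) powr (1/p)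
            \<le> C * real n powr (m/p) * (\<Prod>i<m. weak_norm sm (E i) q (xs i) n)"
    proof (intro exI[of _ C] conjI allI impI)
      show "C \<ge> 0" unfolding C_def by simp
      fix n :: nat and xs :: "nat \<Rightarrow> nat \<Rightarrow> 'a"
      assume n: "n \<ge> 1" and xsE: "\<forall>i<m. \<forall>k<n. xs i k \<in> E i"
      define W where "W i = weak_norm sm (E i) q (xs i) n" for i
      have Wge: "norm (xs i k) \<le> W i" if im: "i < m" and kn: "k < n" for i k
      proof -
        have xE: "xs i k \<in> E i" using xsE im kn by blast
        obtain \<phi> where "\<phi> \<in> dual_ball sm (E i)" "norm (xs i k) \<le> norm (\<phi> (xs i k))"
          using norming[OF im xE] by blast
        then show ?thesis unfolding W_def
          using norm_le_weak_norm[of \<phi> sm "E i" "xs i" k n q] kn im xsE q by blast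
      qed
      have W0: "W i \<ge> 0" if "i < m" for i
        using Wge[OF that, of 0] n by (meson norm_ge_zero order_trans less_le_trans zero_less_one)
      define B where "B = C * (\<Prod>i<m. W i)"
      have B0: "B \<ge> 0" unfolding B_def C_def using W0 by (intro mult_nonneg_nonneg prod_nonneg) auto
      have trm: "norm (T (\<lambda>i\<in>{..<m}. xs i (k i))) powr p \<le> B powr p"
        if k: "k \<in> PiE {..<m} (\<lambda>_. {..<n})" for k
      proof -
        have kl: "\<And>i. i < m \<Longrightarrow> k i < n" using k by (auto simp: PiE_def Pi_def)
        have mem: "(\<lambda>i\<in>{..<m}. xs i (k i)) \<in> PiE {..<m} E"
          using kl xsE by (auto simp: PiE_def Pi_def)
        have P0: "0 \<le> (\<Prod>i<m. norm ((\<lambda>i\<in>{..<m}. xs i (k i)) i))" by (intro prod_nonneg) auto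
        have "norm (T (\<lambda>i\<in>{..<m}. xs i (k i))) \<le> C0 * (\<Prod>i<m. norm ((\<lambda>i\<in>{..<m}. xs i (k i)) i))"
          using C0[OF mem] .
        also have "\<dots> \<le> C * (\<Prod>i<m. norm ((\<lambda>i\<in>{..<m}. xs i (k i)) i))"
          unfolding C_def using P0 by (intro mult_right_mono) auto
        also have "(\<Prod>i<m. norm ((\<lambda>i\<in>{..<m}. xs i (k i)) i)) \<le> (\<Prod>i<m. W i)"
          using Wge kl by (intro prod_mono) auto
        hence "C * (\<Prod>i<m. norm ((\<lambda>i\<in>{..<m}. xs i (k i)) i)) \<le> B"
          unfolding B_def C_def by (intro mult_left_mono) auto
        finally show ?thesis using p by (intro powr_mono2) auto
      qed
      have card: "card (PiE {..<m} (\<lambda>_. {..<n})) = n ^ m" by (simp add: card_PiE)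
      have "(\<Sum>k\<in>PiE {..<m} (\<lambda>_. {..<n}). norm (T (\<lambda>i\<in>{..<m}. xs i (k i))) powr p)
             \<le> real (card (PiE {..<m} (\<lambda>_. {..<n}))) * B powr p"
        using trm by (rule sum_bounded_above)
      also have "\<dots> = real n ^ m * B powr p" using card by simp
      finally have S: "(\<Sum>k\<in>PiE {..<m} (\<lambda>_. {..<n}). norm (T (\<lambda>i\<in>{..<m}. xs i (k i))) powr p)
             \<le> real n ^ m * B powr p" .
      have e1: "(real n ^ m * B powr p) powr (1/p) = (real n ^ m) powr (1/p) * (B powr p) powr (1/p)"
        by (rule powr_mult)
      have e2: "(B powr p) powr (1/p) = B" using p B0 by (simp add: powr_powr)
      have e3: "(real n ^ m) powr (1/p) = real n powr (m/p)"
      proof -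
        have h: "real n powr (real m) = real n ^ m" using n by (simp add: powr_realpow)
        have "(real n powr real m) powr (1/p) = real n powr (real m * (1/p))" by (rule powr_powr)
        also have "real m * (1/p) = m/p" by simp
        finally show ?thesis unfolding h .
      qed
      have "(\<Sum>k\<in>PiE {..<m} (\<lambda>_. {..<n}). norm (T (\<lambda>i\<in>{..<m}. xs i (k i))) powr p) powr (1/p)
            \<le> (real n ^ m * B powr p) powr (1/p)"
        using S p by (intro powr_mono2) (auto intro: sum_nonneg)
      also have "\<dots> = real n powr (m/p) * B" unfolding e1 e2 e3 ..
      also have "\<dots> = C * real n powr (m/p) * (\<Prod>i<m. weak_norm sm (E i) q (xs i) n)"
        unfolding B_def W_def by (simp only: mult_ac)
      finally show "(\<Sum>k\<in>PiE {..<m} (\<lambda>_. {..<n}). norm (T (\<lambda>i\<in>{..<m}. xs i (k i))) powr p) powr (1/p)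
            \<le> C * real n powr (m/p) * (\<Prod>i<m. weak_norm sm (E i) q (xs i) n)" .
    qed
  qed
  then show ?thesis unfolding eta_mult_def by (rule Inf_lower[OF imageI])
qed

theorem mainTheorem4:
  fixes m :: nat and p q :: real and E :: "nat \<Rightarrow> 'a::banach set"
  assumes "1 \<le> q" and "q \<le> p" and "1 \<le> m"
  shows "(banach_family (scaleR :: real \<Rightarrow> 'a \<Rightarrow> 'a) E m \<longrightarrow>
            (q \<le> 2 \<longrightarrow> eta_mult (scaleR :: real \<Rightarrow> 'a \<Rightarrow> 'a) E (scaleR :: real \<Rightarrow> 'b::banach \<Rightarrow> 'b) m p q \<le> ereal (m / p)) \<and>
            (q \<ge> 2 \<longrightarrow> eta_mult (scaleR :: real \<Rightarrow> 'a \<Rightarrow> 'a) E (scaleR :: real \<Rightarrow> 'b \<Rightarrow> 'b) m p q \<le> ereal (m * q / (2 * p))))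
       \<and> (\<forall>(smE :: complex \<Rightarrow> 'a \<Rightarrow> 'a) (smF :: complex \<Rightarrow> 'b \<Rightarrow> 'b).
            banach_family smE E m \<and> kscal smF \<longrightarrow>
            (q \<le> 2 \<longrightarrow> eta_mult smE E smF m p q \<le> ereal (m / p)) \<and>
            (q \<ge> 2 \<longrightarrow> eta_mult smE E smF m p q \<le> ereal (m * q / (2 * p))))"
proof -
  have p: "p > 0" and q: "q > 0" using assms by auto
  have mono: "ereal (m / p) \<le> ereal (m * q / (2 * p))" if "q \<ge> 2"
  proof -
    have "real m / p * 1 \<le> real m / p * (q / 2)" using that p by (intro mult_left_mono) auto
    then show ?thesis by simp
  qed
  have R: "eta_mult (scaleR :: real \<Rightarrow> 'a \<Rightarrow> 'a) E (scaleR :: real \<Rightarrow> 'b \<Rightarrow> 'b) m p q \<le> ereal (m / p)"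
    if bf: "banach_family (scaleR :: real \<Rightarrow> 'a \<Rightarrow> 'a) E m"
  proof (rule eta_bound[OF _ p q])
    fix i x assume "i < m" "x \<in> E i"
    moreover have "ksubspace (scaleR :: real \<Rightarrow> 'a \<Rightarrow> 'a) (E i)"
      using bf \<open>i < m\<close> unfolding banach_family_def by blast
    ultimately show "\<exists>\<phi>\<in>dual_ball (scaleR :: real \<Rightarrow> 'a \<Rightarrow> 'a) (E i). norm x \<le> norm (\<phi> x)"
      using real_norming by blast
  qed
  have C: "eta_mult smE E smF m p q \<le> ereal (m / p)"
    if bf: "banach_family smE E m" for smE :: "complex \<Rightarrow> 'a \<Rightarrow> 'a" and smF :: "complex \<Rightarrow> 'b \<Rightarrow> 'b"
  proof (rule eta_bound[OF _ p q])
    fix i x assume "i < m" "x \<in> E i"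
    moreover have "ksubspace smE (E i)" "kscal smE"
      using bf \<open>i < m\<close> unfolding banach_family_def by blast+
    ultimately show "\<exists>\<phi>\<in>dual_ball smE (E i). norm x \<le> norm (\<phi> x)"
      using complex_norming by blast
  qed
  show ?thesis
  proof (intro conjI impI allI)
    assume "banach_family (scaleR :: real \<Rightarrow> 'a \<Rightarrow> 'a) E m"
    then show "eta_mult (scaleR :: real \<Rightarrow> 'a \<Rightarrow> 'a) E (scaleR :: real \<Rightarrow> 'b \<Rightarrow> 'b) m p q \<le> ereal (m / p)"
      by (rule R)
  next
    assume "banach_family (scaleR :: real \<Rightarrow> 'a \<Rightarrow> 'a) E m" "q \<ge> 2"
    then show "eta_mult (scaleR :: real \<Rightarrow> 'a \<Rightarrow> 'a) E (scaleR :: real \<Rightarrow> 'b \<Rightarrow> 'b) m p q \<le> ereal (m * q / (2 * p))"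
      using R mono order_trans by blast
  next
    fix smE :: "complex \<Rightarrow> 'a \<Rightarrow> 'a" and smF :: "complex \<Rightarrow> 'b \<Rightarrow> 'b"
    assume "banach_family smE E m \<and> kscal smF"
    then show "eta_mult smE E smF m p q \<le> ereal (m / p)" using C by blast
  next
    fix smE :: "complex \<Rightarrow> 'a \<Rightarrow> 'a" and smF :: "complex \<Rightarrow> 'b \<Rightarrow> 'b"
    assume "banach_family smE E m \<and> kscal smF" "q \<ge> 2"
    then show "eta_mult smE E smF m p q \<le> ereal (m * q / (2 * p))"
      using C[of smE smF] mono order_trans by blast
  qed
qed

end
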